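(* Let $\zeta\in(0,\infty)$ and let $\mathbf d_n,\mathbf d^*_n$, $n\in\mathbb N$, be random variables with values in $\mathbf M([0,\zeta])$, and $\mathbf d$ a random variable in $\mathbf C([0,\zeta]^2,\mathbb R)$, such that: (i) $\mathbf d_n\to\mathbf d$ weakly on $(\mathbf C([0,\zeta]^2,\mathbb R),\lVert\cdot\rVert)$; (ii) for all $n\in\mathbb N$ and all $s,s'\in[0,\zeta]$, almost surely $\mathbf d^*_n(s,s')\le\mathbf d_n(s,s')$; (iii) for all $s,s'\in[0,\zeta]$, $|\mathbf d^*_n(s,s')-\mathbf d_n(s,s')|\to0$ in probability. Then $(\mathbf d^*_n,\mathbf d_n)\to(\mathbf d,\mathbf d)$ weakly on $(\mathbf C([0,\zeta]^2,\mathbb R),\lVert\cdot\rVert)^2$.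
   Context: $\mathbf C([0,\zeta]^2,\mathbb R)$: continuous real functions on $[0,\zeta]^2$ with uniform norm $\lVert\cdot\rVert$. $\mathbf M([0,\zeta])$: continuous pseudo-metrics on $[0,\zeta]$ (nonnegative, vanishing on the diagonal, symmetric, triangle inequality). *)

theory Defs
  imports "HOL-Analysis.Analysis" "HOL-Probability.Probability"
begin

text \<open>The metric space C([0,zeta]^2,R) with the uniform norm (functions are
  extensional, i.e. undefined outside the square).\<close>
definition Csq :: "real \<Rightarrow> (real \<times> real \<Rightarrow> real) metric" where
  "Csq zeta = cfunspace (top_of_set ({0..zeta} \<times> {0..zeta})) euclidean_metric"

definition Mps :: "real \<Rightarrow> (real \<times> real \<Rightarrow> real) set" where
  "Mps zeta = {d \<in> mspace (Csq zeta).
      (\<forall>s\<in>{0..zeta}. \<forall>t\<in>{0..zeta}. d (s,t) \<ge> 0 \<and> d (s,t) = d (t,s)) \<and>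
      (\<forall>s\<in>{0..zeta}. d (s,s) = 0) \<and>
      (\<forall>s\<in>{0..zeta}. \<forall>t\<in>{0..zeta}. \<forall>u\<in>{0..zeta}. d (s,u) \<le> d (s,t) + d (t,u))}"

definition borel_of_metric :: "'a metric \<Rightarrow> 'a measure" where
  "borel_of_metric m = sigma (mspace m) {U. openin (mtopology_of m) U}"

definition weak_conv_metric ::
  "'a metric \<Rightarrow> (nat \<Rightarrow> 'w measure) \<Rightarrow> (nat \<Rightarrow> 'w \<Rightarrow> 'a) \<Rightarrow> 'v measure \<Rightarrow> ('v \<Rightarrow> 'a) \<Rightarrow> bool"
  where
  "weak_conv_metric m M X N Y \<longleftrightarrow>
     (\<forall>f. continuous_map (mtopology_of m) euclideanreal f \<and> bounded (f ` mspace m) \<longrightarrow>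
        (\<lambda>n. \<integral>\<omega>. f (X n \<omega>) \<partial>(M n)) \<longlonglongrightarrow> (\<integral>\<omega>. f (Y \<omega>) \<partial>N))"

end

theory Submission
  imports Defs "HOL-Library.Countable"
begin

lemma Csq_mem:
  "f \<in> mspace (Csq zeta) \<longleftrightarrow> continuous_on ({0..zeta} \<times> {0..zeta}) f \<and> f \<in> extensional ({0..zeta} \<times> {0..zeta})"
proof -
  let ?K = "{0..zeta} \<times> {0..(zeta::real)}"
  have cK: "compact ?K" by (simp add: compact_Times)
  have "Metric_space.mbounded UNIV dist (f ` ?K)" if "continuous_on ?K f"
  proof -
    have "bounded (f ` ?K)" using compact_continuous_image[OF that cK] compact_imp_bounded by blast
    then show ?thesis by (metis mbounded_iff_bounded)
  qed
  then show ?thesis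
    by (auto simp: Csq_def continuous_map_iff_continuous)
qed

lemma Csq_dist_le:
  assumes "f \<in> mspace (Csq zeta)" "g \<in> mspace (Csq zeta)" "z \<in> {0..zeta} \<times> {0..zeta}"
  shows "\<bar>f z - g z\<bar> \<le> mdist (Csq zeta) f g"
proof -
  have ne: "{0..zeta} \<times> {0..zeta} \<noteq> {}" using assms(3) by blast
  have "mdist (Csq zeta) f g \<le> mdist (Csq zeta) f g" by simp
  then have "\<forall>x \<in> topspace (top_of_set ({0..zeta} \<times> {0..zeta})). mdist euclidean_metric (f x) (g x) \<le> mdist (Csq zeta) f g"
    using cfunspace_mdist_le[of f "top_of_set ({0..zeta} \<times> {0..zeta})" euclidean_metric g "mdist (Csq zeta) f g"] assms ne
    by (simp add: Csq_def)
  then show ?thesis using assms(3) by (cases z) (simp add: dist_real_def)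
qed

lemma Csq_dist_bound:
  assumes "0 \<le> B" "\<And>z. z \<in> {0..zeta} \<times> {0..zeta} \<Longrightarrow> \<bar>f z - g z\<bar> \<le> B"
  shows "mdist (Csq zeta) f g \<le> B"
  unfolding Csq_def by (rule mdist_cfunspace_le) (use assms in \<open>auto simp: dist_real_def\<close>)

lemma Lip_cont:
  assumes "\<And>x y. x \<in> mspace m \<Longrightarrow> y \<in> mspace m \<Longrightarrow> \<bar>f x - f y\<bar> \<le> L * mdist m x y"
  shows "continuous_map (mtopology_of m) euclideanreal f"
proof -
  have "Lipschitz_continuous_map m euclidean_metric f"
    unfolding Lipschitz_continuous_map_def using assms by (auto simp: dist_real_def)
  then show ?thesis using Lipschitz_continuous_imp_continuous_map by fastforce
qed

lemma eval_cont:
  assumes "z \<in> {0..zeta} \<times> {0..zeta}"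
  shows "continuous_map (mtopology_of (Csq zeta)) euclideanreal (\<lambda>a. a z)"
  by (rule Lip_cont[where L=1]) (use Csq_dist_le assms in auto)

lemma cont_at_metric:
  assumes "continuous_map (mtopology_of m) euclideanreal f" "a \<in> mspace m" "0 < e"
  shows "\<exists>\<rho>>0. \<forall>x\<in>mspace m. mdist m a x < \<rho> \<longrightarrow> \<bar>f x - f a\<bar> < e"
proof -
  interpret Mm: Metric_space "mspace m" "mdist m" by (rule Metric_space_mspace_mdist)
  let ?U = "{x \<in> topspace (mtopology_of m). f x \<in> ball (f a) e}"
  have "openin (mtopology_of m) ?U"
  proof -
    have "openin (mtopology_of m) {x \<in> topspace (mtopology_of m). f x \<in> ball (f a) e}"
      using assms(1) unfolding continuous_map_def by (metis open_ball open_openin)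
    then show ?thesis by simp
  qed
  then have "openin Mm.mtopology ?U" by (simp add: mtopology_of_def)
  moreover have "a \<in> ?U" using assms by simp
  ultimately obtain r where r: "r > 0" "Mm.mball a r \<subseteq> ?U"
    unfolding Mm.openin_mtopology by blast
  show ?thesis
  proof (intro exI[of _ r] conjI ballI impI r)
    fix x assume "x \<in> mspace m" "mdist m a x < r"
    then have "x \<in> ?U" using r assms by auto
    then show "\<bar>f x - f a\<bar> < e" by (simp add: dist_real_def abs_minus_commute)
  qed
qed

section \<open>Measurability\<close>

lemma pd_le: "prod_dist (mdist m) (mdist m) (x1,x2) (y1,y2) \<le> mdist m x1 y1 + mdist m x2 y2"
  by (simp add: prod_dist_def sqrt_sum_squares_le_sum)


lemma space_borel_of_metric [simp]: "space (borel_of_metric m) = mspace m"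
  unfolding borel_of_metric_def
  by (rule space_measure_of) (use openin_subset topspace_mtopology_of in fastforce)

lemma open_in_borel:
  assumes "openin (mtopology_of m) U"
  shows "U \<in> sets (borel_of_metric m)"
proof -
  have "{U. openin (mtopology_of m) U} \<subseteq> Pow (mspace m)"
    using openin_subset topspace_mtopology_of by fastforce
  then show ?thesis using assms
    unfolding borel_of_metric_def by (simp add: sets_measure_of sigma_sets.Basic)
qed

lemma meas_space:
  assumes "X \<in> measurable M (borel_of_metric m)" "\<omega> \<in> space M"
  shows "X \<omega> \<in> mspace m"
  using measurable_space[OF assms] by simp

lemma meas_comp:
  assumes X: "X \<in> measurable M (borel_of_metric m)"
    and phi: "continuous_map (mtopology_of m) euclideanreal \<phi>"
  shows "(\<lambda>\<omega>. \<phi> (X \<omega>)) \<in> borel_measurable M"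
proof (rule borel_measurableI)
  fix V :: "real set" assume "open V"
  let ?U = "{x \<in> topspace (mtopology_of m). \<phi> x \<in> V}"
  have "openin (mtopology_of m) ?U"
    using phi \<open>open V\<close> unfolding continuous_map_def by (metis open_openin)
  then have "?U \<in> sets (borel_of_metric m)" by (rule open_in_borel)
  then have "X -` ?U \<inter> space M \<in> sets M" using X measurable_sets by blast
  moreover have "X -` ?U \<inter> space M = (\<lambda>\<omega>. \<phi> (X \<omega>)) -` V \<inter> space M"
    using meas_space[OF X] by auto
  ultimately show "(\<lambda>\<omega>. \<phi> (X \<omega>)) -` V \<inter> space M \<in> sets M" by simp
qed

lemma meas_pair:
  assumes X: "X \<in> measurable M (borel_of_metric m)" and Y: "Y \<in> measurable M (borel_of_metric m)"
    and D: "countable D" "D \<subseteq> mspace m" "\<And>x e. x \<in> mspace m \<Longrightarrow> 0 < e \<Longrightarrow> \<exists>a\<in>D. mdist m x a < e"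
    and phi: "continuous_map (mtopology_of (prod_metric m m)) euclideanreal \<phi>"
  shows "(\<lambda>\<omega>. \<phi> (X \<omega>, Y \<omega>)) \<in> borel_measurable M"
proof (rule borel_measurableI)
  interpret Mm: Metric_space "mspace m" "mdist m" by (rule Metric_space_mspace_mdist)
  interpret Pm: Metric_space "mspace m \<times> mspace m" "prod_dist (mdist m) (mdist m)"
    by (metis Metric_space_mspace_mdist mdist_prod_metric mspace_prod_metric)
  fix V :: "real set" assume "open V"
  let ?U = "{z \<in> mspace m \<times> mspace m. \<phi> z \<in> V}"
  have "openin (mtopology_of (prod_metric m m)) ?U"
  proof -
    have "openin (mtopology_of (prod_metric m m)) {z \<in> topspace (mtopology_of (prod_metric m m)). \<phi> z \<in> V}"
      using phi \<open>open V\<close> unfolding continuous_map_def by (metis open_openin)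
    then show ?thesis by (simp only: topspace_mtopology_of mspace_prod_metric)
  qed
  then have Uo: "openin Pm.mtopology ?U" by (simp add: mtopology_of_def)
  define I where "I = {(a,b,r). a \<in> D \<and> b \<in> D \<and> r \<in> (\<rat>::real set) \<and> 0 < r \<and>
      (\<forall>x\<in>mspace m. \<forall>y\<in>mspace m. mdist m a x < r \<longrightarrow> mdist m b y < r \<longrightarrow> (x,y) \<in> ?U)}"
  have cI: "countable I"
  proof (rule countable_subset)
    show "I \<subseteq> D \<times> D \<times> \<rat>" by (auto simp: I_def)
    show "countable (D \<times> D \<times> (\<rat>::real set))" using D(1) countable_rat by blast
  qed
  have eq: "(\<lambda>\<omega>. \<phi> (X \<omega>, Y \<omega>)) -` V \<inter> space M =
     (\<Union>(a,b,r)\<in>I. {\<omega>\<in>space M. X \<omega> \<in> Mm.mball a r} \<inter> {\<omega>\<in>space M. Y \<omega> \<in> Mm.mball b r})"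
  proof (intro equalityI subsetI)
    fix \<omega> assume \<omega>: "\<omega> \<in> (\<lambda>\<omega>. \<phi> (X \<omega>, Y \<omega>)) -` V \<inter> space M"
    have Xw: "X \<omega> \<in> mspace m" and Yw: "Y \<omega> \<in> mspace m" using \<omega> meas_space X Y by auto
    then have "(X \<omega>, Y \<omega>) \<in> ?U" using \<omega> by auto
    then obtain r0 where r0: "r0 > 0" "Pm.mball (X \<omega>, Y \<omega>) r0 \<subseteq> ?U"
      using Uo unfolding Pm.openin_mtopology by blast
    obtain r where r: "r \<in> \<rat>" "0 < r" "r < r0/4"
      using Rats_dense_in_real[of 0 "r0/4"] r0 by auto
    obtain a where a: "a \<in> D" "mdist m (X \<omega>) a < r" using D(3)[OF Xw r(2)] by blast
    obtain b where b: "b \<in> D" "mdist m (Y \<omega>) b < r" using D(3)[OF Yw r(2)] by blast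
    have aM: "a \<in> mspace m" and bM: "b \<in> mspace m" using a b D(2) by auto
    have "(a,b,r) \<in> I"
    proof -
      have "(x,y) \<in> ?U" if "x \<in> mspace m" "y \<in> mspace m" "mdist m a x < r" "mdist m b y < r" for x y
      proof -
        have "prod_dist (mdist m) (mdist m) (X \<omega>, Y \<omega>) (x,y) \<le> mdist m (X \<omega>) x + mdist m (Y \<omega>) y"
          by (rule pd_le)
        also have "\<dots> \<le> (mdist m (X \<omega>) a + mdist m a x) + (mdist m (Y \<omega>) b + mdist m b y)"
          using Mm.triangle Xw Yw aM bM that by (meson add_mono)
        also have "\<dots> < r0" using a b that r by linarith
        finally have "(x,y) \<in> Pm.mball (X \<omega>, Y \<omega>) r0" using Xw Yw that by auto
        then show ?thesis using r0 by blast
      qed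
      then show ?thesis unfolding I_def using a b r by auto
    qed
    moreover have "X \<omega> \<in> Mm.mball a r" "Y \<omega> \<in> Mm.mball b r"
      using a b aM bM Xw Yw by (auto simp: Mm.commute)
    ultimately show "\<omega> \<in> (\<Union>(a,b,r)\<in>I. {\<omega>\<in>space M. X \<omega> \<in> Mm.mball a r} \<inter> {\<omega>\<in>space M. Y \<omega> \<in> Mm.mball b r})"
      using \<omega> by blast
  next
    fix \<omega> assume "\<omega> \<in> (\<Union>(a,b,r)\<in>I. {\<omega>\<in>space M. X \<omega> \<in> Mm.mball a r} \<inter> {\<omega>\<in>space M. Y \<omega> \<in> Mm.mball b r})"
    then show "\<omega> \<in> (\<lambda>\<omega>. \<phi> (X \<omega>, Y \<omega>)) -` V \<inter> space M"
      unfolding I_def by auto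
  qed
  have ball_meas: "{\<omega>\<in>space M. Z \<omega> \<in> Mm.mball c r} \<in> sets M"
    if "Z \<in> measurable M (borel_of_metric m)" for Z c r
  proof -
    have "openin (mtopology_of m) (Mm.mball c r)" by (simp add: mtopology_of_def)
    then have "Mm.mball c r \<in> sets (borel_of_metric m)" by (rule open_in_borel)
    then have "Z -` Mm.mball c r \<inter> space M \<in> sets M" using that measurable_sets by blast
    moreover have "Z -` Mm.mball c r \<inter> space M = {\<omega>\<in>space M. Z \<omega> \<in> Mm.mball c r}" by auto
    ultimately show ?thesis by simp
  qed
  show "(\<lambda>\<omega>. \<phi> (X \<omega>, Y \<omega>)) -` V \<inter> space M \<in> sets M"
    unfolding eq
    by (rule sets.countable_UN'[OF cI]) (use ball_meas X Y in auto)
qed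

section \<open>Separability of Csq\<close>

datatype pexp = PC rat | PX | PY | PA pexp pexp | PM pexp pexp

instance pexp :: countable by countable_datatype

primrec peval :: "pexp \<Rightarrow> real \<times> real \<Rightarrow> real" where
  "peval (PC q) z = of_rat q"
| "peval PX z = fst z"
| "peval PY z = snd z"
| "peval (PA a b) z = peval a z + peval b z"
| "peval (PM a b) z = peval a z * peval b z"

lemma cont_peval: "continuous_on S (peval e)"
  by (induction e) (auto intro!: continuous_intros)

lemma rat_approx: fixes a :: real shows "0 < \<eta> \<Longrightarrow> \<exists>r::rat. \<bar>a - of_rat r\<bar> < \<eta>"
proof -
  assume "0 < \<eta>"
  then obtain q where q: "q \<in> \<rat>" "a < q" "q < a + \<eta>" using Rats_dense_in_real[of a "a+\<eta>"] by auto
  then obtain r where "q = of_rat r" by (auto elim: Rats_cases)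
  then show ?thesis using q by (intro exI[of _ r]) simp
qed

lemma linear_decomp:
  assumes "bounded_linear (f :: real \<times> real \<Rightarrow> real)"
  shows "f z = fst z * f (1,0) + snd z * f (0,1)"
proof -
  have lin: "linear f" using assms bounded_linear.linear by blast
  have "z = fst z *\<^sub>R (1,0) + snd z *\<^sub>R (0,1)" by (cases z) simp
  then have "f z = f (fst z *\<^sub>R (1,0) + snd z *\<^sub>R (0,1))" by simp
  also have "\<dots> = fst z * f (1,0) + snd z * f (0,1)"
    unfolding linear_add[OF lin] linear_scale[OF lin] by simp
  finally show ?thesis .
qed

lemma cbound:
  assumes "continuous_on K (p :: real \<times> real \<Rightarrow> real)" "compact K"
  obtains B where "B > 0" "\<And>z. z \<in> K \<Longrightarrow> \<bar>p z\<bar> \<le> B"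
proof -
  have "bounded (p ` K)" using compact_continuous_image[OF assms] compact_imp_bounded by blast
  then obtain B where "B > 0" "\<forall>x\<in>p ` K. norm x \<le> B" unfolding bounded_pos by blast
  then show ?thesis using that by auto
qed

lemma rpf_approx:
  fixes p :: "real \<times> real \<Rightarrow> real"
  assumes "real_polynomial_function p" "compact K"
  shows "\<forall>e>0. \<exists>q. \<forall>z\<in>K. \<bar>p z - peval q z\<bar> < e"
  using assms(1)
proof induction
  case (linear f)
  obtain R where R: "R > 0" "\<And>z. z \<in> K \<Longrightarrow> norm z \<le> R"
    using compact_imp_bounded[OF assms(2)] unfolding bounded_pos by blast
  show ?case
  proof (intro allI impI)
    fix e :: real assume e: "e > 0"
    define \<eta> where "\<eta> = e / (2 * R + 2)"
    have \<eta>: "\<eta> > 0" using e R by (simp add: \<eta>_def)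
    obtain a where a: "\<bar>f (1,0) - of_rat a\<bar> < \<eta>" using rat_approx[OF \<eta>] by blast
    obtain b where b: "\<bar>f (0,1) - of_rat b\<bar> < \<eta>" using rat_approx[OF \<eta>] by blast
    have "\<bar>f z - peval (PA (PM PX (PC a)) (PM PY (PC b))) z\<bar> < e" if z: "z \<in> K" for z
    proof -
      have fx: "\<bar>fst z\<bar> \<le> R" "\<bar>snd z\<bar> \<le> R"
        using R(2)[OF z] norm_fst_le[of "fst z" "snd z"] norm_snd_le[of "snd z" "fst z"] by auto
      have "\<bar>f z - peval (PA (PM PX (PC a)) (PM PY (PC b))) z\<bar>
          = \<bar>fst z * (f (1,0) - of_rat a) + snd z * (f (0,1) - of_rat b)\<bar>"
        using linear_decomp[OF linear, of z] by (simp add: algebra_simps)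
      also have "\<dots> \<le> \<bar>fst z\<bar> * \<bar>f (1,0) - of_rat a\<bar> + \<bar>snd z\<bar> * \<bar>f (0,1) - of_rat b\<bar>"
        by (metis abs_mult abs_triangle_ineq)
      also have "\<dots> \<le> R * \<eta> + R * \<eta>"
        using fx a b by (intro add_mono mult_mono) auto
      also have "\<dots> < e"
      proof -
        have h: "\<eta> * (2*R+2) = e" using R by (simp add: \<eta>_def)
        have "R*\<eta> + R*\<eta> = \<eta> * (2*R+2) - 2*\<eta>" by (simp add: algebra_simps)
        then show ?thesis using h \<eta> by linarith
      qed
      finally show ?thesis .
    qed
    then show "\<exists>q. \<forall>z\<in>K. \<bar>f z - peval q z\<bar> < e" by blast
  qed
next
  case (const c)
  show ?case
  proof (intro allI impI)
    fix e :: real assume "e > 0"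
    then obtain r where "\<bar>c - of_rat r\<bar> < e" using rat_approx by blast
    then show "\<exists>q. \<forall>z\<in>K. \<bar>c - peval q z\<bar> < e" by (intro exI[of _ "PC r"]) simp
  qed
next
  case (add f g)
  show ?case
  proof (intro allI impI)
    fix e :: real assume e: "e > 0"
    obtain q1 where q1: "\<forall>z\<in>K. \<bar>f z - peval q1 z\<bar> < e/2" using add.IH(1) e by (meson half_gt_zero)
    obtain q2 where q2: "\<forall>z\<in>K. \<bar>g z - peval q2 z\<bar> < e/2" using add.IH(2) e by (meson half_gt_zero)
    have "\<forall>z\<in>K. \<bar>(f z + g z) - peval (PA q1 q2) z\<bar> < e"
    proof
      fix z assume "z \<in> K"
      with q1 q2 have "\<bar>f z - peval q1 z\<bar> < e/2" "\<bar>g z - peval q2 z\<bar> < e/2" by auto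
      moreover have "\<bar>(f z + g z) - peval (PA q1 q2) z\<bar> = \<bar>(f z - peval q1 z) + (g z - peval q2 z)\<bar>" by simp
      moreover have "\<bar>(f z - peval q1 z) + (g z - peval q2 z)\<bar> \<le> \<bar>f z - peval q1 z\<bar> + \<bar>g z - peval q2 z\<bar>"
        by (rule abs_triangle_ineq)
      ultimately show "\<bar>(f z + g z) - peval (PA q1 q2) z\<bar> < e" by linarith
    qed
    then show "\<exists>q. \<forall>z\<in>K. \<bar>f z + g z - peval q z\<bar> < e" by blast
  qed
next
  case (mult f g)
  have cf: "continuous_on K f" and cg: "continuous_on K g"
    using mult.hyps continuous_on_polymonial_function real_polynomial_function_eq by blast+
  obtain Bf where Bf: "Bf > 0" "\<And>z. z \<in> K \<Longrightarrow> \<bar>f z\<bar> \<le> Bf" using cbound[OF cf assms(2)] by blast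
  obtain Bg where Bg: "Bg > 0" "\<And>z. z \<in> K \<Longrightarrow> \<bar>g z\<bar> \<le> Bg" using cbound[OF cg assms(2)] by blast
  show ?case
  proof (intro allI impI)
    fix e :: real assume e: "e > 0"
    define \<eta>2 where "\<eta>2 = min 1 (e / (2 * (Bf + 1)))"
    define \<eta>1 where "\<eta>1 = e / (2 * (Bg + 2))"
    have p2: "\<eta>2 > 0" using e Bf by (simp add: \<eta>2_def)
    have p1: "\<eta>1 > 0" using e Bg by (simp add: \<eta>1_def)
    obtain q1 where q1: "\<forall>z\<in>K. \<bar>f z - peval q1 z\<bar> < \<eta>1" using mult.IH(1) p1 by blast
    obtain q2 where q2: "\<forall>z\<in>K. \<bar>g z - peval q2 z\<bar> < \<eta>2" using mult.IH(2) p2 by blast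
    have "\<bar>f z * g z - peval (PM q1 q2) z\<bar> < e" if z: "z \<in> K" for z
    proof -
      let ?a = "peval q1 z" and ?b = "peval q2 z"
      have d1: "\<bar>f z - ?a\<bar> < \<eta>1" and d2: "\<bar>g z - ?b\<bar> < \<eta>2" using q1 q2 z by auto
      have bb: "\<bar>?b\<bar> \<le> Bg + 1" using d2 Bg(2)[OF z] by (simp add: \<eta>2_def) linarith
      have "\<bar>f z * g z - ?a * ?b\<bar> = \<bar>?b * (f z - ?a) + f z * (g z - ?b)\<bar>" by (simp add: algebra_simps)
      also have "\<dots> \<le> \<bar>?b\<bar> * \<bar>f z - ?a\<bar> + \<bar>f z\<bar> * \<bar>g z - ?b\<bar>"
        by (metis abs_mult abs_triangle_ineq)
      also have "\<dots> \<le> (Bg + 1) * \<eta>1 + Bf * \<eta>2"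
        using bb d1 d2 Bf(2)[OF z] by (intro add_mono mult_mono) auto
      finally have ch: "\<bar>f z * g z - ?a * ?b\<bar> \<le> (Bg + 1) * \<eta>1 + Bf * \<eta>2" .
      have c1: "(Bg + 1) * \<eta>1 < e / 2"
        using Bg e by (simp add: \<eta>1_def field_simps)
      have "\<eta>2 \<le> e / (2 * (Bf + 1))" by (simp add: \<eta>2_def)
      then have "Bf * \<eta>2 \<le> Bf * (e / (2 * (Bf + 1)))"
        using Bf by (intro mult_left_mono) auto
      also have "Bf * (e / (2 * (Bf + 1))) \<le> e / 2"
        using Bf e by (simp add: field_simps)
      finally have c2: "Bf * \<eta>2 \<le> e / 2" .
      show ?thesis using ch c1 c2 by simp
    qed
    then show "\<exists>q. \<forall>z\<in>K. \<bar>f z * g z - peval q z\<bar> < e" by (intro exI[of _ "PM q1 q2"]) auto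
  qed
qed

lemma Csq_separable:
  obtains D where "countable D" "D \<subseteq> mspace (Csq zeta)"
    "\<And>f e. f \<in> mspace (Csq zeta) \<Longrightarrow> 0 < e \<Longrightarrow> \<exists>a\<in>D. mdist (Csq zeta) f a < e"
proof -
  let ?K = "{0..zeta} \<times> {0..(zeta::real)}"
  have cK: "compact ?K" by (simp add: compact_Times)
  define D where "D = (\<lambda>q. restrict (peval q) ?K) ` UNIV"
  have "countable D" unfolding D_def by simp
  moreover have DM: "D \<subseteq> mspace (Csq zeta)"
  proof
    fix h assume "h \<in> D"
    then obtain q where q: "h = restrict (peval q) ?K" by (auto simp: D_def)
    have "continuous_on ?K h"
      unfolding q by (rule continuous_on_cong[THEN iffD1, OF refl _ cont_peval[of ?K q]]) simp
    then show "h \<in> mspace (Csq zeta)" unfolding Csq_mem q by simp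
  qed
  moreover have "\<exists>a\<in>D. mdist (Csq zeta) f a < e" if f: "f \<in> mspace (Csq zeta)" and e: "0 < e" for f e
  proof -
    have cf: "continuous_on ?K f" using f Csq_mem by blast
    obtain g where g: "real_polynomial_function g" "\<And>z. z \<in> ?K \<Longrightarrow> \<bar>f z - g z\<bar> < e/4"
      using Stone_Weierstrass_real_polynomial_function[OF cK cf, of "e/4"] e by auto
    obtain q where q: "\<forall>z\<in>?K. \<bar>g z - peval q z\<bar> < e/4"
      using rpf_approx[OF g(1) cK] e by (meson zero_less_divide_iff zero_less_numeral)
    have "mdist (Csq zeta) f (restrict (peval q) ?K) \<le> e/2"
    proof (rule Csq_dist_bound)
      fix z assume z: "z \<in> ?K"
      have "\<bar>f z - peval q z\<bar> \<le> \<bar>f z - g z\<bar> + \<bar>g z - peval q z\<bar>" by linarith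
      moreover have "\<bar>g z - peval q z\<bar> < e/4" using q z by blast
      ultimately show "\<bar>f z - restrict (peval q) ?K z\<bar> \<le> e/2" using g(2)[OF z] z by simp
    qed (use e in simp)
    moreover have "restrict (peval q) ?K \<in> D" by (simp add: D_def)
    ultimately show ?thesis using e by (intro bexI[of _ "restrict (peval q) ?K"]) auto
  qed
  ultimately show ?thesis using that by blast
qed

section \<open>Distance-to-set bump functions and a tightness-type lemma\<close>

definition idist :: "'a metric \<Rightarrow> 'a set \<Rightarrow> real \<Rightarrow> 'a \<Rightarrow> real" where
  "idist m T r y = (if T = {} then r else Inf ((\<lambda>t. mdist m y t) ` T))"

definition gfun :: "'a metric \<Rightarrow> 'a set \<Rightarrow> real \<Rightarrow> 'a \<Rightarrow> real" where
  "gfun m T r y = max 0 (1 - idist m T r y / r)"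

lemma bdd_mdist: "bdd_below ((\<lambda>t. mdist m y t) ` T)"
  by (rule bdd_belowI2[where m=0]) simp

lemma idist_nonneg: assumes "0 < r" shows "0 \<le> idist m T r y"
proof (cases "T = {}")
  case True then show ?thesis using assms by (simp add: idist_def)
next
  case False
  have "0 \<le> Inf ((\<lambda>t. mdist m y t) ` T)" by (rule cINF_greatest[OF False]) simp
  then show ?thesis using False by (simp add: idist_def)
qed

lemma idist_lip:
  assumes "x \<in> mspace m" "y \<in> mspace m" "T \<subseteq> mspace m"
  shows "idist m T r x \<le> mdist m x y + idist m T r y"
proof (cases "T = {}")
  case True then show ?thesis by (simp add: idist_def)
next
  case False
  have "Inf ((\<lambda>t. mdist m x t) ` T) - mdist m x y \<le> Inf ((\<lambda>t. mdist m y t) ` T)"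
  proof (rule cINF_greatest[OF False])
    fix t assume t: "t \<in> T"
    have "Inf ((\<lambda>t. mdist m x t) ` T) \<le> mdist m x t" by (rule cINF_lower[OF bdd_mdist t])
    also have "\<dots> \<le> mdist m x y + mdist m y t" using assms t by (intro mdist_triangle) auto
    finally show "Inf ((\<lambda>t. mdist m x t) ` T) - mdist m x y \<le> mdist m y t" by simp
  qed
  then show ?thesis using False by (simp add: idist_def)
qed

lemma gfun_01: "0 < r \<Longrightarrow> 0 \<le> gfun m T r y \<and> gfun m T r y \<le> 1"
proof -
  assume r: "0 < r"
  have "0 \<le> idist m T r y / r" using idist_nonneg[OF r, of m T y] r by simp
  then show ?thesis unfolding gfun_def by simp
qed

lemma gfun_one:
  assumes "0 < r" "T \<subseteq> mspace m" "y \<in> T"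
  shows "gfun m T r y = 1"
proof -
  have "Inf ((\<lambda>t. mdist m y t) ` T) \<le> mdist m y y" by (rule cINF_lower[OF bdd_mdist assms(3)])
  moreover have "mdist m y y = 0" using assms by auto
  ultimately have "idist m T r y \<le> 0" using assms by (auto simp: idist_def)
  then have "idist m T r y = 0" using idist_nonneg[OF assms(1)] by (meson order_antisym)
  then show ?thesis by (simp add: gfun_def)
qed

lemma gfun_zero:
  assumes "0 < r" "\<forall>t\<in>T. r \<le> mdist m y t"
  shows "gfun m T r y = 0"
proof -
  have "r \<le> idist m T r y"
  proof (cases "T = {}")
    case True then show ?thesis by (simp add: idist_def)
  next
    case False
    have "r \<le> Inf ((\<lambda>t. mdist m y t) ` T)" by (rule cINF_greatest[OF False]) (use assms in blast)
    then show ?thesis using False by (simp add: idist_def)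
  qed
  then have "1 \<le> idist m T r y / r" using assms(1) by (simp add: le_divide_eq)
  then show ?thesis by (simp add: gfun_def)
qed

lemma max_lip: fixes u v :: real shows "\<bar>max 0 (1 - u) - max 0 (1 - v)\<bar> \<le> \<bar>u - v\<bar>"
  by (cases "u \<le> 1"; cases "v \<le> 1"; simp add: max_def abs_le_iff; linarith)

lemma gfun_cont:
  assumes "0 < r" "T \<subseteq> mspace m"
  shows "continuous_map (mtopology_of m) euclideanreal (gfun m T r)"
proof (rule Lip_cont[where L="1/r"])
  fix x y assume xy: "x \<in> mspace m" "y \<in> mspace m"
  let ?a = "idist m T r x" and ?b = "idist m T r y"
  have "?a \<le> mdist m x y + ?b" by (rule idist_lip[OF xy(1) xy(2) assms(2)])
  moreover have "?b \<le> mdist m y x + ?a" by (rule idist_lip[OF xy(2) xy(1) assms(2)])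
  moreover have "mdist m y x = mdist m x y" by (rule mdist_commute)
  ultimately have ab: "\<bar>?a - ?b\<bar> \<le> mdist m x y" by linarith
  have "\<bar>gfun m T r x - gfun m T r y\<bar> \<le> \<bar>?a / r - ?b / r\<bar>"
    unfolding gfun_def by (rule max_lip)
  also have "\<dots> = \<bar>?a - ?b\<bar> / r" using assms(1) by (simp add: diff_divide_distrib[symmetric])
  also have "\<dots> \<le> mdist m x y / r" using ab assms(1) by (simp add: divide_right_mono)
  finally show "\<bar>gfun m T r x - gfun m T r y\<bar> \<le> 1 / r * mdist m x y" by simp
qed

lemma bdd_integrable:
  fixes f :: "'a \<Rightarrow> real"
  assumes "prob_space M" "f \<in> borel_measurable M" "\<And>\<omega>. \<omega> \<in> space M \<Longrightarrow> \<bar>f \<omega>\<bar> \<le> B"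
  shows "integrable M f"
proof -
  interpret prob_space M by fact
  have "AE x in M. norm (f x) \<le> B" using assms(3) by (intro AE_I2) simp
  then show ?thesis using assms(2) by (rule integrable_const_bound)
qed

lemma tight_lemma:
  fixes m :: "'a metric" and M :: "nat \<Rightarrow> 'w measure" and X :: "nat \<Rightarrow> 'w \<Rightarrow> 'a"
    and T :: "nat \<Rightarrow> 'a set"
  assumes probN: "prob_space N"
    and Ym: "Y \<in> measurable N (borel_of_metric m)"
    and conv: "weak_conv_metric m M X N Y"
    and r: "\<And>k. 0 < r k"
    and T: "\<And>k. T k \<subseteq> mspace m"
    and ev: "\<And>y. y \<in> mspace m \<Longrightarrow> \<exists>k0. \<forall>k\<ge>k0. \<forall>t\<in>T k. r k \<le> mdist m y t"
    and e: "0 < e"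
  shows "\<exists>k g. continuous_map (mtopology_of m) euclideanreal g \<and> (\<forall>y. 0 \<le> g y \<and> g y \<le> 1)
     \<and> (\<forall>y\<in>T k. g y = 1) \<and> (\<exists>n0. \<forall>n\<ge>n0. (\<integral>\<omega>. g (X n \<omega>) \<partial>M n) < e)"
proof -
  interpret N: prob_space N by fact
  define G where "G k = gfun m (T k) (r k)" for k
  have Gc: "continuous_map (mtopology_of m) euclideanreal (G k)" for k
    unfolding G_def by (rule gfun_cont[OF r T])
  have G01: "0 \<le> G k y \<and> G k y \<le> 1" for k y
    unfolding G_def by (rule gfun_01[OF r])
  have G1: "\<forall>y\<in>T k. G k y = 1" for k
    unfolding G_def using gfun_one[OF r T] by blast
  have "(\<lambda>k. \<integral>\<omega>. G k (Y \<omega>) \<partial>N) \<longlonglongrightarrow> (\<integral>\<omega>. 0 \<partial>N)"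
  proof (rule integral_dominated_convergence[where w="\<lambda>_. 1"])
    show "(\<lambda>\<omega>. 0::real) \<in> borel_measurable N" by simp
    show "(\<lambda>\<omega>. G k (Y \<omega>)) \<in> borel_measurable N" for k by (rule meas_comp[OF Ym Gc])
    show "integrable N (\<lambda>_. 1::real)" by (rule N.integrable_const)
    show "AE \<omega> in N. (\<lambda>k. G k (Y \<omega>)) \<longlonglongrightarrow> 0"
    proof (rule AE_I2)
      fix \<omega> assume "\<omega> \<in> space N"
      then have "Y \<omega> \<in> mspace m" by (rule meas_space[OF Ym])
      then obtain k0 where k0: "\<forall>k\<ge>k0. \<forall>t\<in>T k. r k \<le> mdist m (Y \<omega>) t" using ev by blast
      have "G k (Y \<omega>) = 0" if "k \<ge> k0" for k
        unfolding G_def by (rule gfun_zero[OF r]) (use k0 that in blast)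
      then have "eventually (\<lambda>k. G k (Y \<omega>) = 0) sequentially"
        unfolding eventually_sequentially by blast
      then show "(\<lambda>k. G k (Y \<omega>)) \<longlonglongrightarrow> 0" by (rule tendsto_eventually)
    qed
    show "AE \<omega> in N. norm (G k (Y \<omega>)) \<le> 1" for k
      by (rule AE_I2) (use G01[of k "Y _"] in simp)
  qed
  then have lim: "(\<lambda>k. \<integral>\<omega>. G k (Y \<omega>) \<partial>N) \<longlonglongrightarrow> 0" by simp
  have "\<exists>k0. \<forall>k\<ge>k0. (\<integral>\<omega>. G k (Y \<omega>) \<partial>N) < e"
    using order_tendstoD(2)[OF lim e] unfolding eventually_sequentially .
  then obtain k where k: "(\<integral>\<omega>. G k (Y \<omega>) \<partial>N) < e" by blast
  have bnd: "bounded (G k ` mspace m)"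
    unfolding bounded_iff using G01 by (intro exI[of _ 1]) auto
  have "(\<lambda>n. \<integral>\<omega>. G k (X n \<omega>) \<partial>M n) \<longlonglongrightarrow> (\<integral>\<omega>. G k (Y \<omega>) \<partial>N)"
    using conv Gc[of k] bnd unfolding weak_conv_metric_def by simp
  from order_tendstoD(2)[OF this k]
  have "\<exists>n0. \<forall>n\<ge>n0. (\<integral>\<omega>. G k (X n \<omega>) \<partial>M n) < e"
    unfolding eventually_sequentially .
  then obtain n0 where "\<forall>n\<ge>n0. (\<integral>\<omega>. G k (X n \<omega>) \<partial>M n) < e" by blast
  then show ?thesis using Gc[of k] G01 G1[of k] by blast
qed

lemma meas_dist:
  assumes X: "X \<in> measurable M (borel_of_metric m)" and Y: "Y \<in> measurable M (borel_of_metric m)"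
    and D: "countable D" "D \<subseteq> mspace m" "\<And>x e. x \<in> mspace m \<Longrightarrow> 0 < e \<Longrightarrow> \<exists>a\<in>D. mdist m x a < e"
  shows "(\<lambda>\<omega>. mdist m (X \<omega>) (Y \<omega>)) \<in> borel_measurable M"
proof -
  have "continuous_map (mtopology_of (prod_metric m m)) euclideanreal (\<lambda>(x,y). mdist m x y)"
    using continuous_map_metric[of m] by simp
  from meas_pair[OF X Y D this] show ?thesis by simp
qed

lemma slutsky:
  fixes m :: "'a metric" and M :: "nat \<Rightarrow> 'w measure" and X Y :: "nat \<Rightarrow> 'w \<Rightarrow> 'a"
    and Yl :: "'v \<Rightarrow> 'a"
  assumes probM: "\<And>n. prob_space (M n)" and probN: "prob_space N"
    and Xm: "\<And>n. X n \<in> measurable (M n) (borel_of_metric m)"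
    and Ym: "\<And>n. Y n \<in> measurable (M n) (borel_of_metric m)"
    and Ylm: "Yl \<in> measurable N (borel_of_metric m)"
    and D: "countable D" "D \<subseteq> mspace m" "\<And>x e. x \<in> mspace m \<Longrightarrow> 0 < e \<Longrightarrow> \<exists>a\<in>D. mdist m x a < e"
    and conv: "weak_conv_metric m M Y N Yl"
    and inprob: "\<And>\<delta>. 0 < \<delta> \<Longrightarrow>
        (\<lambda>n. measure (M n) {\<omega>\<in>space (M n). \<delta> \<le> mdist m (X n \<omega>) (Y n \<omega>)}) \<longlonglongrightarrow> 0"
  shows "weak_conv_metric (prod_metric m m) M (\<lambda>n \<omega>. (X n \<omega>, Y n \<omega>)) N (\<lambda>\<omega>. (Yl \<omega>, Yl \<omega>))"
  unfolding weak_conv_metric_def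
proof (intro allI impI)
  fix f :: "'a \<times> 'a \<Rightarrow> real"
  assume fa: "continuous_map (mtopology_of (prod_metric m m)) euclideanreal f \<and> bounded (f ` mspace (prod_metric m m))"
  then have fc: "continuous_map (mtopology_of (prod_metric m m)) euclideanreal f"
    and fb: "bounded (f ` mspace (prod_metric m m))" by auto
  obtain B where B: "B > 0" "\<And>z. z \<in> mspace m \<times> mspace m \<Longrightarrow> \<bar>f z\<bar> \<le> B"
    using fb unfolding bounded_pos by auto
  define h where "h y = f (y,y)" for y
  have hc: "continuous_map (mtopology_of m) euclideanreal h"
  proof -
    have "continuous_map (mtopology_of m) (mtopology_of (prod_metric m m)) (\<lambda>y. (y,y))"
      by (simp add: continuous_map_paired)
    from continuous_map_compose[OF this fc] have "continuous_map (mtopology_of m) euclideanreal (\<lambda>y. f (y,y))"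
      by (simp add: o_def)
    then show ?thesis unfolding h_def[abs_def] .
  qed
  have hb: "bounded (h ` mspace m)"
    using fb by (rule bounded_subset) (auto simp: h_def)
  have limh: "(\<lambda>n. \<integral>\<omega>. h (Y n \<omega>) \<partial>M n) \<longlonglongrightarrow> (\<integral>\<omega>. h (Yl \<omega>) \<partial>N)"
    by (rule conv[unfolded weak_conv_metric_def, rule_format]) (use hc hb in blast)
  have XYM: "(X n \<omega>, Y n \<omega>) \<in> mspace m \<times> mspace m" if "\<omega> \<in> space (M n)" for n \<omega>
    using meas_space[OF Xm that] meas_space[OF Ym that] by simp
  have Fm: "(\<lambda>\<omega>. f (X n \<omega>, Y n \<omega>)) \<in> borel_measurable (M n)" for n
    by (rule meas_pair[OF Xm Ym D fc])
  have Hm: "(\<lambda>\<omega>. h (Y n \<omega>)) \<in> borel_measurable (M n)" for n by (rule meas_comp[OF Ym hc])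
  have FB: "\<bar>f (X n \<omega>, Y n \<omega>)\<bar> \<le> B" if "\<omega> \<in> space (M n)" for n \<omega>
    by (rule B(2)[OF XYM[OF that]])
  have HB: "\<bar>h (Y n \<omega>)\<bar> \<le> B" if "\<omega> \<in> space (M n)" for n \<omega>
  proof -
    have "(Y n \<omega>, Y n \<omega>) \<in> mspace m \<times> mspace m" using XYM[OF that] by simp
    then show ?thesis unfolding h_def by (rule B(2))
  qed
  have FI: "integrable (M n) (\<lambda>\<omega>. f (X n \<omega>, Y n \<omega>))" for n
    by (rule bdd_integrable[OF probM Fm FB])
  have HI: "integrable (M n) (\<lambda>\<omega>. h (Y n \<omega>))" for n
    by (rule bdd_integrable[OF probM Hm HB])
  have diff0: "(\<lambda>n. (\<integral>\<omega>. f (X n \<omega>, Y n \<omega>) \<partial>M n) - (\<integral>\<omega>. h (Y n \<omega>) \<partial>M n)) \<longlonglongrightarrow> 0"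
  proof (rule LIMSEQ_I)
    fix r :: real assume r: "0 < r"
    define \<epsilon> where "\<epsilon> = r / (2 * (1 + 4 * B))"
    have \<epsilon>: "0 < \<epsilon>" using r B by (simp add: \<epsilon>_def)
    have \<epsilon>r: "\<epsilon> * (1 + 4 * B) < r"
    proof -
      have "\<epsilon> * (1 + 4 * B) = r / 2" unfolding \<epsilon>_def using B by (simp add: field_simps)
      then show ?thesis using r by simp
    qed
    define T where "T k = {y \<in> mspace m. \<exists>x\<in>mspace m. mdist m x y < 1 / real (Suc k) \<and> \<epsilon> < \<bar>f (x,y) - f (y,y)\<bar>}" for k
    have ev: "\<exists>k0. \<forall>k\<ge>k0. \<forall>t\<in>T k. 1 / real (Suc k) \<le> mdist m y t" if y: "y \<in> mspace m" for y
    proof -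
      have yy: "(y,y) \<in> mspace (prod_metric m m)" using y by simp
      obtain \<rho> where \<rho>: "\<rho> > 0" "\<forall>z\<in>mspace (prod_metric m m). mdist (prod_metric m m) (y,y) z < \<rho> \<longrightarrow> \<bar>f z - f (y,y)\<bar> < \<epsilon>/2"
        using cont_at_metric[OF fc yy, of "\<epsilon>/2"] \<epsilon> by auto
      obtain k0 :: nat where k0: "3/\<rho> < real k0" using reals_Archimedean2 by blast
      have "1 / real (Suc k) \<le> mdist m y t" if k: "k \<ge> k0" and t: "t \<in> T k" for k t
      proof (rule ccontr)
        assume "\<not> 1 / real (Suc k) \<le> mdist m y t"
        then have yt: "mdist m y t < 1 / real (Suc k)" by simp
        from t obtain x where tM: "t \<in> mspace m" and x: "x \<in> mspace m" "mdist m x t < 1 / real (Suc k)"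
          "\<epsilon> < \<bar>f (x,t) - f (t,t)\<bar>" by (auto simp: T_def)
        have kk: "3 / real (Suc k) < \<rho>"
        proof -
          have "real k0 \<le> real k" using k by simp
          then have "3/\<rho> < real (Suc k)" using k0 by simp
          then have "3 < \<rho> * real (Suc k)" using \<rho>(1) by (simp add: divide_less_eq mult.commute)
          then show ?thesis by (simp add: divide_less_eq mult.commute)
        qed
        have tri: "mdist m y x \<le> mdist m y t + mdist m t x" by (rule mdist_triangle[OF y tM x(1)])
        have cm: "mdist m t x = mdist m x t" by (rule mdist_commute)
        have d1: "mdist (prod_metric m m) (y,y) (x,t) < \<rho>"
        proof -
          have "prod_dist (mdist m) (mdist m) (y,y) (x,t) \<le> mdist m y x + mdist m y t" by (rule pd_le)
          also have "\<dots> < 3 / real (Suc k)"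
          proof -
            have "3 / real (Suc k) = 3 * (1 / real (Suc k))" by simp
            then show ?thesis using tri cm x(2) yt by linarith
          qed
          finally show ?thesis using kk by simp
        qed
        have d2: "mdist (prod_metric m m) (y,y) (t,t) < \<rho>"
        proof -
          have "prod_dist (mdist m) (mdist m) (y,y) (t,t) \<le> mdist m y t + mdist m y t" by (rule pd_le)
          also have "\<dots> < 3 / real (Suc k)"
          proof -
            have "3 / real (Suc k) = 3 * (1 / real (Suc k))" by simp
            moreover have "0 < 1 / real (Suc k)" by simp
            ultimately show ?thesis using yt by linarith
          qed
          finally show ?thesis using kk by simp
        qed
        have "\<bar>f (x,t) - f (y,y)\<bar> < \<epsilon>/2" using \<rho>(2) d1 x(1) tM by simp
        moreover have "\<bar>f (t,t) - f (y,y)\<bar> < \<epsilon>/2" using \<rho>(2) d2 tM by simp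
        ultimately have "\<bar>f (x,t) - f (t,t)\<bar> < \<epsilon>" by linarith
        then show False using x(3) by linarith
      qed
      then show ?thesis by blast
    qed
    have rpos: "0 < 1 / real (Suc k)" for k by simp
    have TM: "T k \<subseteq> mspace m" for k by (auto simp: T_def)
    obtain k g where gc: "continuous_map (mtopology_of m) euclideanreal g"
      and g01: "\<forall>y. 0 \<le> g y \<and> g y \<le> 1" and g1: "\<forall>y\<in>T k. g y = 1"
      and n1: "\<exists>n0. \<forall>n\<ge>n0. (\<integral>\<omega>. g (Y n \<omega>) \<partial>M n) < \<epsilon>"
      using tight_lemma[OF probN Ylm conv rpos TM ev \<epsilon>] by blast
    obtain n1 where n1: "\<forall>n\<ge>n1. (\<integral>\<omega>. g (Y n \<omega>) \<partial>M n) < \<epsilon>" using n1 by blast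
    define A where "A n = {\<omega>\<in>space (M n). 1 / real (Suc k) \<le> mdist m (X n \<omega>) (Y n \<omega>)}" for n
    have "\<forall>\<^sub>F n in sequentially. measure (M n) (A n) < \<epsilon>"
      unfolding A_def by (rule order_tendstoD(2)[OF inprob[OF rpos] \<epsilon>])
    then obtain n2 where n2: "\<forall>n\<ge>n2. measure (M n) (A n) < \<epsilon>" unfolding eventually_sequentially by blast
    show "\<exists>no. \<forall>n\<ge>no. norm ((\<integral>\<omega>. f (X n \<omega>, Y n \<omega>) \<partial>M n) - (\<integral>\<omega>. h (Y n \<omega>) \<partial>M n) - 0) < r"
    proof (intro exI[of _ "max n1 n2"] allI impI)
      fix n assume n: "max n1 n2 \<le> n"
      interpret P: prob_space "M n" by (rule probM)
      have dm: "(\<lambda>\<omega>. mdist m (X n \<omega>) (Y n \<omega>)) \<in> borel_measurable (M n)"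
        by (rule meas_dist[OF Xm Ym D])
      have Asets: "A n \<in> sets (M n)" unfolding A_def using dm by measurable
      have Gm: "(\<lambda>\<omega>. g (Y n \<omega>)) \<in> borel_measurable (M n)" by (rule meas_comp[OF Ym gc])
      define W where "W \<omega> = \<epsilon> + 2 * B * g (Y n \<omega>) + 2 * B * indicator (A n) \<omega>" for \<omega>
      have GI: "integrable (M n) (\<lambda>\<omega>. g (Y n \<omega>))"
        by (rule bdd_integrable[OF probM Gm, where B=1]) (use g01 in auto)
      have II: "integrable (M n) (\<lambda>\<omega>. indicator (A n) \<omega> :: real)"
        using Asets by (intro bdd_integrable[OF probM, where B=1]) (auto simp: indicator_def)
      have WI: "integrable (M n) W" unfolding W_def using GI II by simp
      have intW: "(\<integral>\<omega>. W \<omega> \<partial>M n) = \<epsilon> + 2 * B * (\<integral>\<omega>. g (Y n \<omega>) \<partial>M n) + 2 * B * measure (M n) (A n)"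
      proof -
        have "A n \<inter> space (M n) = A n" by (auto simp: A_def)
        then show ?thesis unfolding W_def using GI II by (simp add: P.prob_space)
      qed
      have pw: "\<bar>f (X n \<omega>, Y n \<omega>) - h (Y n \<omega>)\<bar> \<le> W \<omega>" if \<omega>: "\<omega> \<in> space (M n)" for \<omega>
      proof -
        have b2: "\<bar>f (X n \<omega>, Y n \<omega>) - h (Y n \<omega>)\<bar> \<le> 2 * B" using FB[OF \<omega>] HB[OF \<omega>] by linarith
        have g0: "0 \<le> g (Y n \<omega>)" using g01 by blast
        have i0: "0 \<le> (indicator (A n) \<omega> :: real)" by simp
        have gB: "0 \<le> 2 * B * g (Y n \<omega>)" using g0 B by simp
        have iB: "0 \<le> 2 * B * (indicator (A n) \<omega> :: real)" using i0 B by simp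
        show ?thesis
        proof (cases "\<omega> \<in> A n")
          case True
          then have "W \<omega> = \<epsilon> + 2 * B * g (Y n \<omega>) + 2 * B" by (simp add: W_def)
          then show ?thesis using b2 gB \<epsilon> by linarith
        next
          case False
          then have close: "mdist m (X n \<omega>) (Y n \<omega>) < 1 / real (Suc k)" using \<omega> by (auto simp: A_def)
          show ?thesis
          proof (cases "\<epsilon> < \<bar>f (X n \<omega>, Y n \<omega>) - h (Y n \<omega>)\<bar>")
            case True
            have "Y n \<omega> \<in> T k" unfolding T_def using XYM[OF \<omega>] close True by (auto simp: h_def)
            then have "g (Y n \<omega>) = 1" using g1 by blast
            then have "W \<omega> = \<epsilon> + 2 * B + 2 * B * indicator (A n) \<omega>" by (simp add: W_def)
            then show ?thesis using b2 \<epsilon> iB by linarith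
          next
            case False
            then show ?thesis using gB iB unfolding W_def by linarith
          qed
        qed
      qed
      have "\<bar>(\<integral>\<omega>. f (X n \<omega>, Y n \<omega>) \<partial>M n) - (\<integral>\<omega>. h (Y n \<omega>) \<partial>M n)\<bar>
          = \<bar>\<integral>\<omega>. f (X n \<omega>, Y n \<omega>) - h (Y n \<omega>) \<partial>M n\<bar>"
        using FI HI by simp
      also have "\<dots> \<le> (\<integral>\<omega>. \<bar>f (X n \<omega>, Y n \<omega>) - h (Y n \<omega>)\<bar> \<partial>M n)"
        by (rule integral_abs_bound)
      also have "\<dots> \<le> (\<integral>\<omega>. W \<omega> \<partial>M n)"
      proof (rule integral_mono)
        show "integrable (M n) (\<lambda>\<omega>. \<bar>f (X n \<omega>, Y n \<omega>) - h (Y n \<omega>)\<bar>)"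
          using FI HI by simp
        show "integrable (M n) W" by (rule WI)
        show "\<bar>f (X n \<omega>, Y n \<omega>) - h (Y n \<omega>)\<bar> \<le> W \<omega>" if "\<omega> \<in> space (M n)" for \<omega>
          by (rule pw[OF that])
      qed
      also have "\<dots> < \<epsilon> + 2 * B * \<epsilon> + 2 * B * \<epsilon>"
      proof -
        have "(\<integral>\<omega>. g (Y n \<omega>) \<partial>M n) < \<epsilon>" using n1 n by auto
        moreover have "measure (M n) (A n) < \<epsilon>" using n2 n by auto
        ultimately have "2 * B * (\<integral>\<omega>. g (Y n \<omega>) \<partial>M n) < 2 * B * \<epsilon>"
          "2 * B * measure (M n) (A n) < 2 * B * \<epsilon>" using B by simp_all
        then show ?thesis unfolding intW by linarith
      qed
      also have "\<dots> = \<epsilon> * (1 + 4 * B)" by (simp add: algebra_simps)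
      also have "\<dots> < r" by (rule \<epsilon>r)
      finally show "norm ((\<integral>\<omega>. f (X n \<omega>, Y n \<omega>) \<partial>M n) - (\<integral>\<omega>. h (Y n \<omega>) \<partial>M n) - 0) < r" by simp
    qed
  qed
  have "(\<lambda>n. ((\<integral>\<omega>. f (X n \<omega>, Y n \<omega>) \<partial>M n) - (\<integral>\<omega>. h (Y n \<omega>) \<partial>M n)) + (\<integral>\<omega>. h (Y n \<omega>) \<partial>M n))
        \<longlonglongrightarrow> 0 + (\<integral>\<omega>. h (Yl \<omega>) \<partial>N)"
    by (rule tendsto_add[OF diff0 limh])
  then show "(\<lambda>n. \<integral>\<omega>. f ((\<lambda>n \<omega>. (X n \<omega>, Y n \<omega>)) n \<omega>) \<partial>M n) \<longlonglongrightarrow> (\<integral>\<omega>. f ((\<lambda>\<omega>. (Yl \<omega>, Yl \<omega>)) \<omega>) \<partial>N)"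
    by (simp add: h_def)
qed

lemma rat_near:
  fixes s zeta :: real
  assumes "s \<in> {0..zeta}" "0 < zeta" "0 < \<eta>"
  shows "\<exists>q\<in>\<rat>. q \<in> {0..zeta} \<and> \<bar>q - s\<bar> < \<eta>"
proof -
  have "max 0 (s - \<eta>) < min zeta (s + \<eta>)" using assms by auto
  then obtain q where q: "q \<in> \<rat>" "max 0 (s-\<eta>) < q" "q < min zeta (s+\<eta>)"
    using Rats_dense_in_real by blast
  then show ?thesis by (intro bexI[of _ q]) auto
qed

lemma le_dense:
  assumes a: "a \<in> mspace (Csq zeta)" and b: "b \<in> mspace (Csq zeta)" and z: "0 < zeta"
    and le: "\<forall>p\<in>(\<rat> \<inter> {0..zeta}) \<times> (\<rat> \<inter> {0..zeta}). b p \<le> a p"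
    and st: "s \<in> {0..zeta}" "t \<in> {0..zeta}"
  shows "b (s,t) \<le> a (s,t)"
proof (rule ccontr)
  let ?K = "{0..zeta} \<times> {0..zeta}"
  assume "\<not> ?thesis"
  then have pos: "0 < b (s,t) - a (s,t)" by simp
  have cont: "continuous_on ?K (\<lambda>z. b z - a z)"
    using a b Csq_mem continuous_on_diff by blast
  have stK: "(s,t) \<in> ?K" using st by simp
  obtain \<eta> where \<eta>: "\<eta> > 0"
    "\<forall>z\<in>?K. dist z (s,t) < \<eta> \<longrightarrow> dist (b z - a z) (b (s,t) - a (s,t)) < b (s,t) - a (s,t)"
    using cont[unfolded continuous_on_iff, rule_format, OF stK pos] by blast
  have h2: "0 < \<eta>/2" using \<eta> by simp
  obtain q where q: "q \<in> \<rat>" "q \<in> {0..zeta}" "\<bar>q - s\<bar> < \<eta>/2" using rat_near[OF st(1) z h2] by blast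
  obtain q' where q': "q' \<in> \<rat>" "q' \<in> {0..zeta}" "\<bar>q' - t\<bar> < \<eta>/2" using rat_near[OF st(2) z h2] by blast
  have "dist (q,q') (s,t) \<le> \<bar>q - s\<bar> + \<bar>q' - t\<bar>"
    unfolding dist_Pair_Pair dist_real_def by (intro sqrt_sum_squares_le_sum) auto
  then have "dist (q,q') (s,t) < \<eta>" using q q' by linarith
  then have "dist (b (q,q') - a (q,q')) (b (s,t) - a (s,t)) < b (s,t) - a (s,t)"
    using \<eta>(2) q q' by simp
  then have "0 < b (q,q') - a (q,q')" by (simp add: dist_real_def abs_less_iff)
  moreover have "b (q,q') \<le> a (q,q')" using le q q' by blast
  ultimately show False by linarith
qed

lemma det_bound:
  assumes a: "a \<in> Mps zeta" and b: "b \<in> Mps zeta"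
    and le: "\<forall>s\<in>{0..zeta}. \<forall>t\<in>{0..zeta}. b (s,t) \<le> a (s,t)"
    and G: "G \<subseteq> {0..zeta}" "\<forall>s\<in>{0..zeta}. \<exists>p\<in>G. \<bar>s - p\<bar> \<le> h"
    and small: "\<forall>s\<in>{0..zeta}. \<forall>t\<in>{0..zeta}. \<bar>s - t\<bar> \<le> h \<longrightarrow> a (s,t) < c"
    and grid: "\<forall>p\<in>G. \<forall>q\<in>G. \<bar>b (p,q) - a (p,q)\<bar> \<le> c"
    and c: "0 \<le> c"
  shows "mdist (Csq zeta) b a \<le> 5 * c"
proof (rule Csq_dist_bound)
  show "0 \<le> 5 * c" using c by simp
  fix z assume z: "z \<in> {0..zeta} \<times> {0..zeta}"
  obtain s t where zst: "z = (s,t)" by (cases z)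
  have s: "s \<in> {0..zeta}" and t: "t \<in> {0..zeta}" using z zst by auto
  have triA: "\<And>x y w. x \<in> {0..zeta} \<Longrightarrow> y \<in> {0..zeta} \<Longrightarrow> w \<in> {0..zeta} \<Longrightarrow> a (x,w) \<le> a (x,y) + a (y,w)"
    using a unfolding Mps_def by blast
  have triB: "\<And>x y w. x \<in> {0..zeta} \<Longrightarrow> y \<in> {0..zeta} \<Longrightarrow> w \<in> {0..zeta} \<Longrightarrow> b (x,w) \<le> b (x,y) + b (y,w)"
    using b unfolding Mps_def by blast
  obtain p where p: "p \<in> G" "\<bar>s - p\<bar> \<le> h" using G(2) s by blast
  obtain q where q: "q \<in> G" "\<bar>t - q\<bar> \<le> h" using G(2) t by blast
  have pI: "p \<in> {0..zeta}" and qI: "q \<in> {0..zeta}" using p q G(1) by auto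
  have sp: "a (s,p) < c" using small s pI p(2) by blast
  have ps: "a (p,s) < c" using small s pI p(2) by (metis abs_minus_commute)
  have tq: "a (t,q) < c" using small t qI q(2) by blast
  have qt: "a (q,t) < c" using small t qI q(2) by (metis abs_minus_commute)
  have gpq: "a (p,q) \<le> b (p,q) + c" using grid p(1) q(1) by (smt (verit))
  have "a (s,t) \<le> a (s,p) + a (p,t)" using triA s pI t by blast
  moreover have "a (p,t) \<le> a (p,q) + a (q,t)" using triA pI qI t by blast
  moreover have "b (p,q) \<le> b (p,s) + b (s,q)" using triB pI s qI by blast
  moreover have "b (s,q) \<le> b (s,t) + b (t,q)" using triB s t qI by blast
  moreover have "b (p,s) \<le> a (p,s)" using le pI s by blast
  moreover have "b (t,q) \<le> a (t,q)" using le t qI by blast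
  moreover have "b (s,t) \<le> a (s,t)" using le s t by blast
  ultimately have "\<bar>b (s,t) - a (s,t)\<bar> \<le> 5 * c" using sp ps tq qt gpq by linarith
  then show "\<bar>b z - a z\<bar> \<le> 5 * c" using zst by simp
qed

lemma main_inprob:
  fixes zeta :: real
    and M :: "nat \<Rightarrow> 'w measure" and N :: "'v measure"
    and d dstar :: "nat \<Rightarrow> 'w \<Rightarrow> real \<times> real \<Rightarrow> real"
    and dlim :: "'v \<Rightarrow> real \<times> real \<Rightarrow> real"
  assumes zeta: "0 < zeta"
    and probM: "\<And>n. prob_space (M n)"
    and probN: "prob_space N"
    and d_meas: "\<And>n. d n \<in> measurable (M n) (borel_of_metric (Csq zeta))"
    and dstar_meas: "\<And>n. dstar n \<in> measurable (M n) (borel_of_metric (Csq zeta))"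
    and d_vals: "\<And>n \<omega>. \<omega> \<in> space (M n) \<Longrightarrow> d n \<omega> \<in> Mps zeta"
    and dstar_vals: "\<And>n \<omega>. \<omega> \<in> space (M n) \<Longrightarrow> dstar n \<omega> \<in> Mps zeta"
    and dlim_meas: "dlim \<in> measurable N (borel_of_metric (Csq zeta))"
    and conv: "weak_conv_metric (Csq zeta) M d N dlim"
    and le: "\<And>n s s'. s \<in> {0..zeta} \<Longrightarrow> s' \<in> {0..zeta} \<Longrightarrow>
               AE \<omega> in M n. dstar n \<omega> (s, s') \<le> d n \<omega> (s, s')"
    and inprob: "\<And>s s' e. s \<in> {0..zeta} \<Longrightarrow> s' \<in> {0..zeta} \<Longrightarrow> 0 < e \<Longrightarrow>
               (\<lambda>n. measure (M n) {\<omega> \<in> space (M n). \<bar>dstar n \<omega> (s, s') - d n \<omega> (s, s')\<bar> > e})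
                 \<longlonglongrightarrow> 0"
    and \<delta>: "0 < \<delta>"
  shows "(\<lambda>n. measure (M n) {\<omega>\<in>space (M n). \<delta> \<le> mdist (Csq zeta) (dstar n \<omega>) (d n \<omega>)}) \<longlonglongrightarrow> 0"
proof (rule LIMSEQ_I)
  fix r :: real assume r: "0 < r"
  define \<epsilon> where "\<epsilon> = r / 2"
  have \<epsilon>: "0 < \<epsilon>" using r by (simp add: \<epsilon>_def)
  define c where "c = \<delta> / 8"
  have c: "0 < c" using \<delta> by (simp add: c_def)
  define T where "T k = {a \<in> mspace (Csq zeta). \<exists>s\<in>{0..zeta}. \<exists>t\<in>{0..zeta}.
      \<bar>s - t\<bar> \<le> 1 / real (Suc k) \<and> c \<le> \<bar>a (s,t) - a (s,s)\<bar>}" for k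
  have TM: "T k \<subseteq> mspace (Csq zeta)" for k by (auto simp: T_def)
  have ev: "\<exists>k0. \<forall>k\<ge>k0. \<forall>a\<in>T k. c/4 \<le> mdist (Csq zeta) y a" if y: "y \<in> mspace (Csq zeta)" for y
  proof -
    have "continuous_on ({0..zeta} \<times> {0..zeta}) y" using y Csq_mem by blast
    then have uc: "uniformly_continuous_on ({0..zeta} \<times> {0..zeta}) y"
      by (rule compact_uniformly_continuous) (simp add: compact_Times)
    have c2: "0 < c/2" using c by simp
    obtain \<eta> where \<eta>: "\<eta> > 0" "\<forall>x\<in>{0..zeta} \<times> {0..zeta}. \<forall>x'\<in>{0..zeta} \<times> {0..zeta}. dist x' x < \<eta> \<longrightarrow> dist (y x') (y x) < c/2"
      using uc[unfolded uniformly_continuous_on_def, rule_format, OF c2] by blast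
    obtain k0 :: nat where k0: "1/\<eta> < real k0" using reals_Archimedean2 by blast
    have "c/4 \<le> mdist (Csq zeta) y a" if k: "k \<ge> k0" and a: "a \<in> T k" for k a
    proof -
      from a obtain s t where aM: "a \<in> mspace (Csq zeta)" and s: "s \<in> {0..zeta}" and t: "t \<in> {0..zeta}"
        and st: "\<bar>s - t\<bar> \<le> 1 / real (Suc k)" and big: "c \<le> \<bar>a (s,t) - a (s,s)\<bar>"
        unfolding T_def by blast
      have kk: "1 / real (Suc k) < \<eta>"
      proof -
        have "real k0 \<le> real k" using k by simp
        then have "1/\<eta> < real (Suc k)" using k0 by simp
        then have "1 < \<eta> * real (Suc k)" using \<eta>(1) by (simp add: divide_less_eq mult.commute)
        then show ?thesis by (simp add: divide_less_eq mult.commute)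
      qed
      have "dist (s,t) (s,s) = \<bar>s - t\<bar>" by (simp add: dist_Pair_Pair dist_real_def abs_minus_commute)
      then have "dist (s,t) (s,s) < \<eta>" using st kk by linarith
      moreover have "(s,t) \<in> {0..zeta} \<times> {0..zeta}" "(s,s) \<in> {0..zeta} \<times> {0..zeta}" using s t by auto
      ultimately have "dist (y (s,t)) (y (s,s)) < c/2" using \<eta>(2) by blast
      then have yd: "\<bar>y (s,t) - y (s,s)\<bar> < c/2" by (simp add: dist_real_def)
      have st1: "\<bar>a (s,t) - y (s,t)\<bar> \<le> mdist (Csq zeta) a y" by (rule Csq_dist_le[OF aM y]) (use s t in simp)
      have st2: "\<bar>a (s,s) - y (s,s)\<bar> \<le> mdist (Csq zeta) a y" by (rule Csq_dist_le[OF aM y]) (use s in simp)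
      have "mdist (Csq zeta) a y = mdist (Csq zeta) y a" by (rule mdist_commute)
      then show ?thesis using big yd st1 st2 by linarith
    qed
    then show ?thesis by blast
  qed
  have rpos: "\<And>k. 0 < c/4" using c by simp
  obtain k g where gc: "continuous_map (mtopology_of (Csq zeta)) euclideanreal g"
      and g01: "\<forall>y. 0 \<le> g y \<and> g y \<le> 1" and g1: "\<forall>y\<in>T k. g y = 1"
      and n1: "\<exists>n0. \<forall>n\<ge>n0. (\<integral>\<omega>. g (d n \<omega>) \<partial>M n) < \<epsilon>"
    using tight_lemma[where r="\<lambda>_. c/4", OF probN dlim_meas conv rpos TM ev \<epsilon>] by blast
  obtain n1 where n1: "\<forall>n\<ge>n1. (\<integral>\<omega>. g (d n \<omega>) \<partial>M n) < \<epsilon>" using n1 by blast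
  define h where "h = 1 / real (Suc k)"
  have h: "0 < h" by (simp add: h_def)
  have cover: "{0..zeta} \<subseteq> (\<Union>p\<in>{0..zeta}. ball p h)" using h by auto
  obtain G where G: "G \<subseteq> {0..zeta}" "finite G" "{0..zeta} \<subseteq> (\<Union>p\<in>G. ball p h)"
    using compactE_image[of "{0..zeta}" "{0..zeta}" "\<lambda>p. ball p h"] cover by auto
  have Gh: "\<forall>s\<in>{0..zeta}. \<exists>p\<in>G. \<bar>s - p\<bar> \<le> h"
  proof
    fix s assume "s \<in> {0..zeta}"
    then obtain p where "p \<in> G" "dist p s < h" using G(3) by auto
    then show "\<exists>p\<in>G. \<bar>s - p\<bar> \<le> h" by (intro bexI[of _ p]) (auto simp: dist_real_def abs_minus_commute)
  qed
  define B where "B n pq = {\<omega> \<in> space (M n). c < \<bar>dstar n \<omega> pq - d n \<omega> pq\<bar>}" for n pq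
  have lim: "(\<lambda>n. \<Sum>pq\<in>G\<times>G. measure (M n) (B n pq)) \<longlonglongrightarrow> 0"
  proof (rule tendsto_null_sum)
    fix pq assume "pq \<in> G \<times> G"
    then obtain p q where pq0: "pq = (p,q)" "p \<in> G" "q \<in> G" by blast
    have pq: "pq = (p,q)" "p \<in> {0..zeta}" "q \<in> {0..zeta}" using pq0 G(1) by blast+
    show "(\<lambda>n. measure (M n) (B n pq)) \<longlonglongrightarrow> 0" unfolding B_def pq(1) using inprob[OF pq(2) pq(3) c] by simp
  qed
  have "\<exists>n0. \<forall>n\<ge>n0. (\<Sum>pq\<in>G\<times>G. measure (M n) (B n pq)) < \<epsilon>"
    using order_tendstoD(2)[OF lim \<epsilon>] unfolding eventually_sequentially .
  then obtain n2 where n2: "\<forall>n\<ge>n2. (\<Sum>pq\<in>G\<times>G. measure (M n) (B n pq)) < \<epsilon>" by blast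
  show "\<exists>no. \<forall>n\<ge>no. norm (measure (M n) {\<omega>\<in>space (M n). \<delta> \<le> mdist (Csq zeta) (dstar n \<omega>) (d n \<omega>)} - 0) < r"
  proof (intro exI[of _ "max n1 n2"] allI impI)
    fix n assume n: "max n1 n2 \<le> n"
    interpret P: prob_space "M n" by (rule probM)
    let ?A = "{\<omega>\<in>space (M n). \<delta> \<le> mdist (Csq zeta) (dstar n \<omega>) (d n \<omega>)}"
    let ?Q = "(\<rat> \<inter> {0..zeta}) \<times> (\<rat> \<inter> {0..zeta})"
    have cQ: "countable ?Q" using countable_rat by (intro countable_SIGMA) auto
    have "\<forall>p\<in>?Q. AE \<omega> in M n. dstar n \<omega> p \<le> d n \<omega> p" using le by auto
    then have AE1: "AE \<omega> in M n. \<forall>p\<in>?Q. dstar n \<omega> p \<le> d n \<omega> p"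
      by (rule AE_ball_countable[OF cQ, THEN iffD2])
    have "AE \<omega> in M n. (\<forall>p\<in>?Q. dstar n \<omega> p \<le> d n \<omega> p) \<longrightarrow>
        (\<forall>s\<in>{0..zeta}. \<forall>t\<in>{0..zeta}. dstar n \<omega> (s,t) \<le> d n \<omega> (s,t))"
    proof (rule AE_I2, intro impI ballI)
      fix \<omega> s t assume \<omega>: "\<omega> \<in> space (M n)" and hq: "\<forall>p\<in>?Q. dstar n \<omega> p \<le> d n \<omega> p"
        and s: "s \<in> {0..zeta}" and t: "t \<in> {0..zeta}"
      have aM: "d n \<omega> \<in> mspace (Csq zeta)" using d_vals[OF \<omega>] by (simp add: Mps_def)
      have bM: "dstar n \<omega> \<in> mspace (Csq zeta)" using dstar_vals[OF \<omega>] by (simp add: Mps_def)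
      show "dstar n \<omega> (s,t) \<le> d n \<omega> (s,t)" by (rule le_dense[OF aM bM zeta hq s t])
    qed
    from AE_mp[OF AE1 this]
    have AE2: "AE \<omega> in M n. \<forall>s\<in>{0..zeta}. \<forall>t\<in>{0..zeta}. dstar n \<omega> (s,t) \<le> d n \<omega> (s,t)" .
    obtain Nn where Nn: "{\<omega> \<in> space (M n). \<not> (\<forall>s\<in>{0..zeta}. \<forall>t\<in>{0..zeta}. dstar n \<omega> (s,t) \<le> d n \<omega> (s,t))} \<subseteq> Nn"
      "emeasure (M n) Nn = 0" "Nn \<in> sets (M n)"
      using AE2 by (rule AE_E)
    define G1 where "G1 = {\<omega> \<in> space (M n). 1 \<le> g (d n \<omega>)}"
    have Gm: "(\<lambda>\<omega>. g (d n \<omega>)) \<in> borel_measurable (M n)" by (rule meas_comp[OF d_meas gc])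
    have G1s: "G1 \<in> sets (M n)" unfolding G1_def using Gm by measurable
    have Bs: "B n pq \<in> sets (M n)" if "pq \<in> G \<times> G" for pq
    proof -
      have pqK: "pq \<in> {0..zeta} \<times> {0..zeta}" using that G(1) by auto
      have "(\<lambda>\<omega>. dstar n \<omega> pq - d n \<omega> pq) \<in> borel_measurable (M n)"
        by (intro borel_measurable_diff meas_comp[OF dstar_meas eval_cont[OF pqK]] meas_comp[OF d_meas eval_cont[OF pqK]])
      then show ?thesis unfolding B_def by measurable
    qed
    let ?U = "\<Union>pq\<in>G\<times>G. B n pq"
    have Us: "?U \<in> sets (M n)" using Bs G(2) by (intro sets.finite_UN) auto
    have sub: "?A \<subseteq> G1 \<union> ?U \<union> Nn"
    proof
      fix \<omega> assume \<omega>A: "\<omega> \<in> ?A"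
      then have \<omega>: "\<omega> \<in> space (M n)" and big: "\<delta> \<le> mdist (Csq zeta) (dstar n \<omega>) (d n \<omega>)" by auto
      show "\<omega> \<in> G1 \<union> ?U \<union> Nn"
      proof (rule ccontr)
        assume "\<not> ?thesis"
        then have nG1: "\<omega> \<notin> G1" and nB: "\<forall>pq\<in>G\<times>G. \<omega> \<notin> B n pq" and nN: "\<omega> \<notin> Nn" by auto
        have leall: "\<forall>s\<in>{0..zeta}. \<forall>t\<in>{0..zeta}. dstar n \<omega> (s,t) \<le> d n \<omega> (s,t)"
          using Nn(1) nN \<omega> by blast
        have aP: "d n \<omega> \<in> Mps zeta" and bP: "dstar n \<omega> \<in> Mps zeta" using d_vals dstar_vals \<omega> by auto
        have "g (d n \<omega>) < 1" using nG1 \<omega> by (auto simp: G1_def)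
        then have nT: "d n \<omega> \<notin> T k" using g1 by auto
        have aM: "d n \<omega> \<in> mspace (Csq zeta)" using aP by (simp add: Mps_def)
        have small: "\<forall>s\<in>{0..zeta}. \<forall>t\<in>{0..zeta}. \<bar>s - t\<bar> \<le> h \<longrightarrow> d n \<omega> (s,t) < c"
        proof (intro ballI impI)
          fix s t assume s: "s \<in> {0..zeta}" and t: "t \<in> {0..zeta}" and st: "\<bar>s - t\<bar> \<le> h"
          have "\<not> c \<le> \<bar>d n \<omega> (s,t) - d n \<omega> (s,s)\<bar>" using nT aM s t st unfolding T_def h_def by blast
          moreover have "d n \<omega> (s,s) = 0" "0 \<le> d n \<omega> (s,t)" using aP s t unfolding Mps_def by auto
          ultimately show "d n \<omega> (s,t) < c" by simp
        qed
        have grid: "\<forall>p\<in>G. \<forall>q\<in>G. \<bar>dstar n \<omega> (p,q) - d n \<omega> (p,q)\<bar> \<le> c"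
          using nB \<omega> unfolding B_def by (auto simp: not_less)
        have "mdist (Csq zeta) (dstar n \<omega>) (d n \<omega>) \<le> 5 * c"
          by (rule det_bound[OF aP bP leall G(1) Gh small grid]) (use c in simp)
        then show False using big \<delta> by (simp add: c_def)
      qed
    qed
    have m1: "measure (M n) ?A \<le> measure (M n) (G1 \<union> ?U \<union> Nn)"
      by (rule P.finite_measure_mono[OF sub]) (intro sets.Un G1s Us Nn(3))
    have m2: "measure (M n) (G1 \<union> ?U \<union> Nn) \<le> measure (M n) (G1 \<union> ?U) + measure (M n) Nn"
      by (rule measure_subadditive) (simp_all add: sets.Un[OF G1s Us] Nn(3) P.emeasure_eq_measure)
    have m3: "measure (M n) Nn = 0" using Nn(2) by (simp add: measure_def)
    have m4: "measure (M n) (G1 \<union> ?U) \<le> measure (M n) G1 + measure (M n) ?U"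
      by (rule measure_subadditive) (simp_all add: G1s Us P.emeasure_eq_measure)
    have m5: "measure (M n) ?U \<le> (\<Sum>pq\<in>G\<times>G. measure (M n) (B n pq))"
      by (rule measure_UNION_le) (use G(2) Bs in auto)
    have m6: "measure (M n) G1 \<le> (\<integral>\<omega>. g (d n \<omega>) \<partial>M n)"
    proof -
      have "G1 \<inter> space (M n) = G1" by (auto simp: G1_def)
      then have "measure (M n) G1 = (\<integral>\<omega>. indicator G1 \<omega> \<partial>M n)" by simp
      also have "\<dots> \<le> (\<integral>\<omega>. g (d n \<omega>) \<partial>M n)"
      proof (rule integral_mono)
        show "integrable (M n) (\<lambda>\<omega>. indicator G1 \<omega> :: real)"
          using G1s by (intro bdd_integrable[OF probM, where B=1]) (auto simp: indicator_def)
        show "integrable (M n) (\<lambda>\<omega>. g (d n \<omega>))"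
          by (rule bdd_integrable[OF probM Gm, where B=1]) (use g01 in auto)
        show "indicator G1 \<omega> \<le> g (d n \<omega>)" if "\<omega> \<in> space (M n)" for \<omega>
          using g01 that by (auto simp: indicator_def G1_def)
      qed
      finally show ?thesis .
    qed
    have "(\<integral>\<omega>. g (d n \<omega>) \<partial>M n) < \<epsilon>" using n1 n by auto
    moreover have "(\<Sum>pq\<in>G\<times>G. measure (M n) (B n pq)) < \<epsilon>" using n2 n by auto
    ultimately have "measure (M n) ?A < r" using m1 m2 m3 m4 m5 m6 by (simp add: \<epsilon>_def)
    then show "norm (measure (M n) ?A - 0) < r" by simp
  qed
qed

theorem proposition4p4:
  fixes zeta :: real
    and M :: "nat \<Rightarrow> 'w measure" and N :: "'v measure"
    and d dstar :: "nat \<Rightarrow> 'w \<Rightarrow> real \<times> real \<Rightarrow> real"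
    and dlim :: "'v \<Rightarrow> real \<times> real \<Rightarrow> real"
  assumes zeta: "0 < zeta"
    and probM: "\<And>n. prob_space (M n)"
    and probN: "prob_space N"
    and d_meas: "\<And>n. d n \<in> measurable (M n) (borel_of_metric (Csq zeta))"
    and dstar_meas: "\<And>n. dstar n \<in> measurable (M n) (borel_of_metric (Csq zeta))"
    and d_vals: "\<And>n \<omega>. \<omega> \<in> space (M n) \<Longrightarrow> d n \<omega> \<in> Mps zeta"
    and dstar_vals: "\<And>n \<omega>. \<omega> \<in> space (M n) \<Longrightarrow> dstar n \<omega> \<in> Mps zeta"
    and dlim_meas: "dlim \<in> measurable N (borel_of_metric (Csq zeta))"
    and dlim_vals: "\<And>\<omega>. \<omega> \<in> space N \<Longrightarrow> dlim \<omega> \<in> mspace (Csq zeta)"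
    and conv: "weak_conv_metric (Csq zeta) M d N dlim"
    and le: "\<And>n s s'. s \<in> {0..zeta} \<Longrightarrow> s' \<in> {0..zeta} \<Longrightarrow>
               AE \<omega> in M n. dstar n \<omega> (s, s') \<le> d n \<omega> (s, s')"
    and inprob: "\<And>s s' e. s \<in> {0..zeta} \<Longrightarrow> s' \<in> {0..zeta} \<Longrightarrow> 0 < e \<Longrightarrow>
               (\<lambda>n. measure (M n) {\<omega> \<in> space (M n). \<bar>dstar n \<omega> (s, s') - d n \<omega> (s, s')\<bar> > e})
                 \<longlonglongrightarrow> 0"
  shows "weak_conv_metric (prod_metric (Csq zeta) (Csq zeta)) M (\<lambda>n \<omega>. (dstar n \<omega>, d n \<omega>))
           N (\<lambda>\<omega>. (dlim \<omega>, dlim \<omega>))"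
proof -
  obtain D where D: "countable D" "D \<subseteq> mspace (Csq zeta)"
    "\<And>f e. f \<in> mspace (Csq zeta) \<Longrightarrow> 0 < e \<Longrightarrow> \<exists>a\<in>D. mdist (Csq zeta) f a < e"
    using Csq_separable[of zeta] by blast
  show ?thesis
  proof (rule slutsky[OF probM probN dstar_meas d_meas dlim_meas D(1) D(2) _ conv])
    fix x and e :: real assume "x \<in> mspace (Csq zeta)" "0 < e"
    then show "\<exists>a\<in>D. mdist (Csq zeta) x a < e" by (rule D(3))
  next
    fix \<delta> :: real assume "0 < \<delta>"
    note mi = main_inprob[OF zeta probM probN d_meas dstar_meas d_vals dstar_vals dlim_meas conv le inprob]
    show "(\<lambda>n. measure (M n) {\<omega>\<in>space (M n). \<delta> \<le> mdist (Csq zeta) (dstar n \<omega>) (d n \<omega>)}) \<longlonglongrightarrow> 0"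
      by (rule mi) (use \<open>0 < \<delta>\<close> in auto)
  qed
qed

end
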